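(* Let $\varphi:[0,\infty)\to(0,\infty)$ be continuous and increasing with $\int_0^\infty\frac{\varphi(t)}{1+t^2}dt=\infty$. (i) If $\varphi$ is normally growing, then there is $c>0$ with $\int_0^a\frac{\varphi(x)}{x^2+1}dx\ge c\,\frac{\varphi(a)}{a}$ for all $a\ge1$. (ii) If $\varphi$ is rapidly growing, then there is $C>0$ with $\int_0^a\frac{\varphi(x)}{x^2+1}dx\le C\,\frac{\varphi(a)}{a}$ for all $a\ge1$.
   Context: $\varphi$ is normally growing if for some $A>0$ the function $\varphi(x)/x^2$ is decreasing on $[A,\infty)$ and $\varphi(x)$ is a convex function of $\log x$ on $[A,\infty)$; rapidly growing if for some $\varepsilon>0$ and $A>0$ the function $\varphi(x)/x^{1+\varepsilon}$ is increasing on $[A,\infty)$. *)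

theory Defs
  imports "HOL-Analysis.Analysis"
begin

definition normally_growing :: "(real \<Rightarrow> real) \<Rightarrow> bool" where
  "normally_growing \<phi> \<longleftrightarrow>
     (\<exists>A>0. antimono_on {A..} (\<lambda>x. \<phi> x / x\<^sup>2) \<and>
            convex_on {ln A..} (\<lambda>s. \<phi> (exp s)))"

definition rapidly_growing :: "(real \<Rightarrow> real) \<Rightarrow> bool" where
  "rapidly_growing \<phi> \<longleftrightarrow>
     (\<exists>\<epsilon>>0. \<exists>A>0. mono_on {A..} (\<lambda>x. \<phi> x / x powr (1 + \<epsilon>)))"

end

theory Submission
  imports Defs
begin


lemma integrable_f:
  fixes \<phi> :: "real \<Rightarrow> real"
  assumes cont: "continuous_on {0..} \<phi>" and "0 \<le> u"
  shows "(\<lambda>x. \<phi> x / (x\<^sup>2 + 1)) integrable_on {u..v}"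
proof (rule integrable_continuous_interval)
  have "continuous_on {u..v} \<phi>" by (rule continuous_on_subset[OF cont]) (use assms in auto)
  moreover have "\<And>x::real. x\<^sup>2 + 1 \<noteq> 0" by (metis add_nonneg_pos power2_less_0 not_less zero_less_one less_irrefl)
  ultimately show "continuous_on {u..v} (\<lambda>x. \<phi> x / (x\<^sup>2 + 1))"
    by (intro continuous_intros) auto
qed

lemma sqpos: "0 < (y::real)\<^sup>2 + 1"
  by (simp add: add_nonneg_pos)

lemma part1:
  fixes \<phi> :: "real \<Rightarrow> real"
  assumes cont: "continuous_on {0..} \<phi>"
    and pos: "\<And>t. t \<ge> 0 \<Longrightarrow> \<phi> t > 0"
    and incr: "mono_on {0..} \<phi>"
    and A: "A > 0" and anti: "antimono_on {A..} (\<lambda>x. \<phi> x / x\<^sup>2)"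
  shows "\<exists>c>0. \<forall>a\<ge>1. integral {0..a} (\<lambda>x. \<phi> x / (x\<^sup>2 + 1)) \<ge> c * (\<phi> a / a)"
proof -
  define \<kappa> where "\<kappa> = min (1/4) (\<phi> 0 / \<phi> (2*A))"
  have k0: "\<kappa> > 0" unfolding \<kappa>_def using pos[of 0] pos[of "2*A"] A by auto
  have kle1: "\<kappa> \<le> 1/4" and kle2: "\<kappa> \<le> \<phi> 0 / \<phi> (2*A)" unfolding \<kappa>_def by (rule min.cobounded1, rule min.cobounded2)
  have key: "\<phi> x \<ge> \<kappa> * \<phi> a" if a: "a \<ge> 1" and x: "a/2 \<le> x" "x \<le> a" for a x
  proof (cases "a/2 \<ge> A")
    case True
    have "\<phi> a / a\<^sup>2 \<le> \<phi> x / x\<^sup>2"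
      using anti True x unfolding monotone_on_def by auto
    hence "\<phi> a * x\<^sup>2 \<le> \<phi> x * a\<^sup>2" using x a
      by (simp add: divide_simps)
    moreover have "a\<^sup>2 \<le> 4 * x\<^sup>2"
    proof -
      have "a * a \<le> (2*x) * (2*x)" using x a by (intro mult_mono) auto
      thus ?thesis by (simp add: power2_eq_square)
    qed
    moreover have "\<phi> a > 0" using pos a by auto
    ultimately have "\<phi> a * a\<^sup>2 \<le> 4 * (\<phi> x * a\<^sup>2)"
    proof -
      assume h: "\<phi> a * x\<^sup>2 \<le> \<phi> x * a\<^sup>2" "a\<^sup>2 \<le> 4 * x\<^sup>2" "0 < \<phi> a"
      have "\<phi> a * a\<^sup>2 \<le> \<phi> a * (4 * x\<^sup>2)" using h by (intro mult_left_mono) auto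
      also have "\<dots> = 4 * (\<phi> a * x\<^sup>2)" by simp
      also have "\<dots> \<le> 4 * (\<phi> x * a\<^sup>2)" using h by simp
      finally show ?thesis .
    qed
    hence "\<phi> a \<le> 4 * \<phi> x" using a by simp
    moreover have "\<kappa> * \<phi> a \<le> (1/4) * \<phi> a"
      using pos[of a] a kle1 by (intro mult_right_mono) auto
    ultimately show ?thesis by linarith
  next
    case False
    have "\<phi> a \<le> \<phi> (2*A)" using incr False a A unfolding monotone_on_def by auto
    moreover have "\<phi> 0 \<le> \<phi> x" using incr x a unfolding monotone_on_def by auto
    moreover have "\<phi> (2*A) > 0" "\<phi> 0 > 0" using pos A by auto
    ultimately have "\<phi> 0 / \<phi> (2*A) * \<phi> a \<le> \<phi> x"
    proof -
      assume h: "\<phi> a \<le> \<phi> (2*A)" "\<phi> 0 \<le> \<phi> x" "\<phi> (2*A) > 0" "\<phi> 0 > 0"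
      have "\<phi> 0 / \<phi> (2*A) * \<phi> a \<le> \<phi> 0 / \<phi> (2*A) * \<phi> (2*A)"
        using h by (intro mult_left_mono) auto
      also have "\<dots> = \<phi> 0" using h by simp
      finally show ?thesis using h by linarith
    qed
    moreover have "\<kappa> * \<phi> a \<le> \<phi> 0 / \<phi> (2*A) * \<phi> a"
      using pos[of a] a kle2 by (intro mult_right_mono) auto
    ultimately show ?thesis by linarith
  qed
  show ?thesis
  proof (intro exI[of _ "\<kappa>/4"] conjI allI impI)
    show "\<kappa>/4 > 0" using k0 by simp
    fix a :: real assume a: "a \<ge> 1"
    let ?f = "\<lambda>x. \<phi> x / (x\<^sup>2 + 1)"
    have "integral {a/2..a} (\<lambda>x. \<kappa> * \<phi> a / (a\<^sup>2 + 1)) \<le> integral {a/2..a} ?f"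
    proof (rule integral_le)
      show "?f integrable_on {a/2..a}" using a by (intro integrable_f cont) auto
      fix x assume x: "x \<in> {a/2..a}"
      have "\<kappa> * \<phi> a / (a\<^sup>2 + 1) \<le> \<phi> x / (a\<^sup>2 + 1)"
        using key[OF a] x by (intro divide_right_mono) auto
      also have "\<dots> \<le> \<phi> x / (x\<^sup>2 + 1)"
        using x a pos[of x] by (intro divide_left_mono) (auto intro!: power_mono mult_pos_pos sqpos)
      finally show "\<kappa> * \<phi> a / (a\<^sup>2 + 1) \<le> ?f x" .
    qed auto
    also have "\<dots> \<le> integral {0..a} ?f"
    proof (rule integral_subset_le)
      show "{a/2..a} \<subseteq> {0..a}" using a by auto
      show "?f integrable_on {a/2..a}" using a by (intro integrable_f cont) auto
      show "?f integrable_on {0..a}" by (intro integrable_f cont) auto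
      show "\<forall>x\<in>{0..a}. 0 \<le> ?f x"
      proof
        fix x assume "x \<in> {0..a}"
        then have "\<phi> x > 0" using pos by auto
        then show "0 \<le> ?f x" using sqpos[of x] by simp
      qed
    qed
    finally have I0: "integral {a/2..a} (\<lambda>x. \<kappa> * \<phi> a / (a\<^sup>2 + 1)) \<le> integral {0..a} ?f" .
    have "integral {a/2..a} (\<lambda>x. \<kappa> * \<phi> a / (a\<^sup>2 + 1)) = (a - a/2) * (\<kappa> * \<phi> a / (a\<^sup>2 + 1))"
      using a by simp
    also have "a - a/2 = a/2" by simp
    finally have I: "(a/2) * (\<kappa> * \<phi> a / (a\<^sup>2 + 1)) \<le> integral {0..a} ?f" using I0 by simp
    have "\<kappa>/4 * (\<phi> a / a) \<le> (a/2) * (\<kappa> * \<phi> a / (a\<^sup>2 + 1))"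
    proof -
      have "1 * 1 \<le> a * a" using a by (intro mult_mono) auto
      hence h1: "a\<^sup>2 + 1 \<le> 2 * a\<^sup>2" by (simp add: power2_eq_square)
      have h2: "\<kappa> * \<phi> a > 0" using k0 pos[of a] a by simp
      have "\<kappa>/4 * (\<phi> a / a) = (a/2) * (\<kappa> * \<phi> a / (2 * a\<^sup>2))"
        using a by (simp add: field_simps power2_eq_square)
      also have "\<dots> \<le> (a/2) * (\<kappa> * \<phi> a / (a\<^sup>2 + 1))"
        using h1 h2 a less_imp_le[OF h2] by (intro mult_left_mono divide_left_mono) (auto intro!: sqpos mult_pos_pos)
      finally show ?thesis .
    qed
    with I show "\<kappa>/4 * (\<phi> a / a) \<le> integral {0..a} ?f" by linarith
  qed
qed



lemma powr_int_ftc: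
  fixes B a e :: real
  assumes "0 < B" "B \<le> a" "e > 0"
  shows "((\<lambda>x. x powr (e - 1)) has_integral (a powr e / e - B powr e / e)) {B..a}"
proof (rule fundamental_theorem_of_calculus[OF assms(2)])
  fix x assume x: "x \<in> {B..a}"
  hence "x > 0" using assms by auto
  have "((\<lambda>x. x powr e / e) has_real_derivative (e * x powr (e - 1)) / e) (at x)"
    by (rule DERIV_cdivide[OF has_real_derivative_powr[OF \<open>x > 0\<close>]])
  hence "((\<lambda>x. x powr e / e) has_real_derivative x powr (e - 1)) (at x within {B..a})"
    using assms(3) by (simp add: has_field_derivative_at_within)
  thus "((\<lambda>x. x powr e / e) has_vector_derivative x powr (e - 1)) (at x within {B..a})"
    by (simp add: has_real_derivative_iff_has_vector_derivative)
qed

lemma part2: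
  fixes \<phi> :: "real \<Rightarrow> real"
  assumes cont: "continuous_on {0..} \<phi>"
    and pos: "\<And>t. t \<ge> 0 \<Longrightarrow> \<phi> t > 0"
    and incr: "mono_on {0..} \<phi>"
    and e: "e > 0" and A: "A > 0" and mon: "mono_on {A..} (\<lambda>x. \<phi> x / x powr (1 + e))"
  shows "\<exists>C>0. \<forall>a\<ge>1. integral {0..a} (\<lambda>x. \<phi> x / (x\<^sup>2 + 1)) \<le> C * (\<phi> a / a)"
proof -
  let ?f = "\<lambda>x. \<phi> x / (x\<^sup>2 + 1)"
  define B where "B = max A 1"
  have B1: "B \<ge> 1" and BA: "B \<ge> A" unfolding B_def by auto
  have p0: "\<phi> 0 > 0" and pB: "\<phi> B > 0" using pos B1 by auto
  define K where "K = B\<^sup>2 * \<phi> B / \<phi> 0"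
  have K0: "K \<ge> 0" unfolding K_def using p0 pB by simp
  define C where "C = K + B\<^sup>2 + 1/e"
  have C0: "C > 0" unfolding C_def using K0 e by (simp add: add_nonneg_pos)
  have small: "integral {0..b} ?f \<le> b * \<phi> B" if b: "0 \<le> b" "b \<le> B" for b
  proof -
    have "integral {0..b} ?f \<le> integral {0..b} (\<lambda>x. \<phi> B)"
    proof (rule integral_le)
      show "?f integrable_on {0..b}" by (intro integrable_f cont) auto
      fix x assume x: "x \<in> {0..b}"
      have "?f x \<le> \<phi> x" using pos[of x] x sqpos[of x]
        by (simp add: divide_le_eq)
      also have "\<phi> x \<le> \<phi> B" using incr x b B1 unfolding monotone_on_def by auto
      finally show "?f x \<le> \<phi> B" .
    qed auto
    also have "\<dots> = b * \<phi> B" using b by simp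
    finally show ?thesis .
  qed
  show ?thesis
  proof (intro exI[of _ C] conjI allI impI)
    show "C > 0" by (rule C0)
    fix a :: real assume a: "a \<ge> 1"
    have pa: "\<phi> a > 0" using pos a by auto
    show "integral {0..a} ?f \<le> C * (\<phi> a / a)"
    proof (cases "a \<le> B")
      case True
      have I: "integral {0..a} ?f \<le> a * \<phi> B" using small[of a] True a by auto
      have "a * a \<le> B * B" using True a by (intro mult_mono) auto
      hence "a * a * \<phi> B \<le> B\<^sup>2 * \<phi> B" using pB by (simp add: power2_eq_square)
      also have "\<dots> = K * \<phi> 0" unfolding K_def using p0 by simp
      also have "\<dots> \<le> K * \<phi> a" using K0 incr a unfolding monotone_on_def by (intro mult_left_mono) auto
      also have "\<dots> \<le> C * \<phi> a" unfolding C_def using pa e by (intro mult_right_mono) auto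
      finally have "a * \<phi> B \<le> C * (\<phi> a / a)" using a by (simp add: field_simps)
      with I show ?thesis by linarith
    next
      case False
      hence aB: "B \<le> a" by simp
      define c where "c = \<phi> a / a powr (1 + e)"
      have c0: "c > 0" unfolding c_def using pa a by simp
      have apow: "a powr (1 + e) = a * a powr e" using a by (simp add: powr_add)
      have ratio: "\<phi> B / B \<le> \<phi> a / a"
      proof -
        have "\<phi> B / B powr (1 + e) \<le> c" unfolding c_def
          using mon aB BA unfolding monotone_on_def by auto
        moreover have "B powr e \<le> a powr e" using aB B1 e by (intro powr_mono2) auto
        ultimately have "\<phi> B / B powr (1 + e) * B powr e \<le> c * a powr e"
          using B1 pB by (intro mult_mono) (auto intro!: less_imp_le[OF c0])
        moreover have "\<phi> B / B powr (1 + e) * B powr e = \<phi> B / B" using B1 by (simp add: powr_add)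
        moreover have "c * a powr e = \<phi> a / a" unfolding c_def apow using a by simp
        ultimately show ?thesis by simp
      qed
      have int1: "integral {0..B} ?f \<le> B\<^sup>2 * (\<phi> a / a)"
      proof -
        have "integral {0..B} ?f \<le> B * \<phi> B" using small[of B] B1 by auto
        also have "\<dots> = B\<^sup>2 * (\<phi> B / B)" using B1 by (simp add: power2_eq_square)
        also have "\<dots> \<le> B\<^sup>2 * (\<phi> a / a)" using ratio by (intro mult_left_mono) auto
        finally show ?thesis .
      qed
      have hi: "((\<lambda>x. c * x powr (e - 1)) has_integral c * (a powr e / e - B powr e / e)) {B..a}"
        using powr_int_ftc[OF _ aB e] B1 by (intro has_integral_mult_right) auto
      have int2: "integral {B..a} ?f \<le> 1/e * (\<phi> a / a)"
      proof -
        have "integral {B..a} ?f \<le> integral {B..a} (\<lambda>x. c * x powr (e - 1))"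
        proof (rule integral_le)
          show "?f integrable_on {B..a}" using B1 by (intro integrable_f cont) auto
          show "(\<lambda>x. c * x powr (e - 1)) integrable_on {B..a}" using hi by blast
          fix x assume x: "x \<in> {B..a}"
          hence x0: "x > 0" "x \<ge> A" using B1 BA by auto
          have px: "\<phi> x > 0" using pos x0 by auto
          have "\<phi> x / x powr (1 + e) \<le> c" unfolding c_def
            using mon x x0 unfolding monotone_on_def by auto
          hence "\<phi> x \<le> c * x powr (1 + e)" using x0 by (simp add: divide_le_eq)
          hence le1: "\<phi> x / x\<^sup>2 \<le> c * x powr (1 + e) / x\<^sup>2" using x0 by (intro divide_right_mono) auto
          have eq: "x powr (1 + e) / x\<^sup>2 = x powr (e - 1)"
          proof -
            have "x powr (e - 1) = x powr (1 + e) / x powr 2"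
              using powr_diff[of x "1 + e" 2] by simp
            thus ?thesis using x0 by simp
          qed
          have "c * x powr (1 + e) / x\<^sup>2 = c * x powr (e - 1)"
            by (simp only: times_divide_eq_right[symmetric] eq)
          with le1 have "\<phi> x / x\<^sup>2 \<le> c * x powr (e - 1)" by simp
          moreover have "?f x \<le> \<phi> x / x\<^sup>2" using px x0
            by (intro divide_left_mono) (auto intro!: mult_pos_pos sqpos)
          ultimately show "?f x \<le> c * x powr (e - 1)" by linarith
        qed
        also have "\<dots> = c * (a powr e / e - B powr e / e)" using hi by (rule integral_unique)
        also have "\<dots> \<le> c * (a powr e / e)" using c0 e B1 by (intro mult_left_mono) auto
        also have "\<dots> = 1/e * (\<phi> a / a)" unfolding c_def apow using a by simp
        finally show ?thesis .
      qed
      have "integral {0..a} ?f = integral {0..B} ?f + integral {B..a} ?f"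
        using Henstock_Kurzweil_Integration.integral_combine[where a=0 and c=B and b=a and f="?f"] B1 aB integrable_f[OF cont, of 0 a] by simp
      also have "\<dots> \<le> (B\<^sup>2 + 1/e) * (\<phi> a / a)" using add_mono[OF int1 int2] by (simp only: distrib_right)
      also have "\<dots> \<le> C * (\<phi> a / a)" unfolding C_def using K0 pa a by (intro mult_right_mono) auto
      finally show ?thesis .
    qed
  qed
qed


theorem lemma4:
  fixes \<phi> :: "real \<Rightarrow> real"
  assumes cont: "continuous_on {0..} \<phi>"
    and pos: "\<And>t. t \<ge> 0 \<Longrightarrow> \<phi> t > 0"
    and incr: "mono_on {0..} \<phi>"
    and div: "\<not> (\<lambda>t. \<phi> t / (1 + t\<^sup>2)) integrable_on {0..}"
  shows "(normally_growing \<phi> \<longrightarrow>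
            (\<exists>c>0. \<forall>a\<ge>1. integral {0..a} (\<lambda>x. \<phi> x / (x\<^sup>2 + 1)) \<ge> c * (\<phi> a / a)))
       \<and> (rapidly_growing \<phi> \<longrightarrow>
            (\<exists>C>0. \<forall>a\<ge>1. integral {0..a} (\<lambda>x. \<phi> x / (x\<^sup>2 + 1)) \<le> C * (\<phi> a / a)))"
proof (intro conjI impI)
  assume "normally_growing \<phi>"
  then obtain A where "A > 0" "antimono_on {A..} (\<lambda>x. \<phi> x / x\<^sup>2)"
    unfolding normally_growing_def by blast
  then show "\<exists>c>0. \<forall>a\<ge>1. integral {0..a} (\<lambda>x. \<phi> x / (x\<^sup>2 + 1)) \<ge> c * (\<phi> a / a)"
    using part1[OF cont pos incr] by blast
next
  assume "rapidly_growing \<phi>"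
  then obtain e A where "e > 0" "A > 0" "mono_on {A..} (\<lambda>x. \<phi> x / x powr (1 + e))"
    unfolding rapidly_growing_def by blast
  then show "\<exists>C>0. \<forall>a\<ge>1. integral {0..a} (\<lambda>x. \<phi> x / (x\<^sup>2 + 1)) \<le> C * (\<phi> a / a)"
    using part2[OF cont pos incr] by blast
qed

end
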